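(* Suppose $(\varepsilon,\beta,\gamma;(12))\in\mathrm{Par}(n)$. Let $b$ and $c$ be the orders of $\beta$ and $\gamma$ as elements of $\mathcal S_n$. Then $c\mid 2b$, and if $c$ is odd then $c=b$.
   Context: A Latin square of order $n$ is an $n\times n$ array with rows, columns and symbols indexed by $[n]$, each symbol occurring once in each row and each column, with triple set $O(L)=\{(i,j,L(i,j))\}$. Permutations act on the right; $\varepsilon$ is the identity. A paratopism $(\alpha,\beta,\gamma;(12))$ with $\alpha,\beta,\gamma\in\mathcal S_n$ maps $L$ to $L^\sigma$ with triple set $\{(y\beta,x\alpha,z\gamma):(x,y,z)\in O(L)\}$; it is an autoparatopism of $L$ if $L^\sigma=L$. $\mathrm{Par}(n)$ denotes the set of paratopisms that are autoparatopisms of at least one Latin square of order $n$. *)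

theory Defs
  imports "HOL-Combinatorics.Permutations"
begin

text \<open>Rows, columns and symbols are indexed by {..<n} (i.e. [n] shifted to start at 0).\<close>

definition latin_square :: "nat \<Rightarrow> (nat \<Rightarrow> nat \<Rightarrow> nat) \<Rightarrow> bool" where
  "latin_square n L \<longleftrightarrow>
     (\<forall>i<n. \<forall>j<n. L i j < n) \<and>
     (\<forall>i<n. inj_on (L i) {..<n}) \<and>
     (\<forall>j<n. inj_on (\<lambda>i. L i j) {..<n})"

definition triples :: "nat \<Rightarrow> (nat \<Rightarrow> nat \<Rightarrow> nat) \<Rightarrow> (nat \<times> nat \<times> nat) set" where
  "triples n L = {(i, j, L i j) | i j. i < n \<and> j < n}"

definition is_autoparatopism_12 ::
  "nat \<Rightarrow> (nat \<Rightarrow> nat) \<Rightarrow> (nat \<Rightarrow> nat) \<Rightarrow> (nat \<Rightarrow> nat) \<Rightarrow> (nat \<Rightarrow> nat \<Rightarrow> nat) \<Rightarrow> bool" where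
  "is_autoparatopism_12 n \<alpha> \<beta> \<gamma> L \<longleftrightarrow>
     (\<lambda>(x, y, z). (\<beta> y, \<alpha> x, \<gamma> z)) ` triples n L = triples n L"

definition in_Par_12 :: "nat \<Rightarrow> (nat \<Rightarrow> nat) \<Rightarrow> (nat \<Rightarrow> nat) \<Rightarrow> (nat \<Rightarrow> nat) \<Rightarrow> bool" where
  "in_Par_12 n \<alpha> \<beta> \<gamma> \<longleftrightarrow>
     \<alpha> permutes {..<n} \<and> \<beta> permutes {..<n} \<and> \<gamma> permutes {..<n} \<and>
     (\<exists>L. latin_square n L \<and> is_autoparatopism_12 n \<alpha> \<beta> \<gamma> L)"

definition perm_order :: "(nat \<Rightarrow> nat) \<Rightarrow> nat" where
  "perm_order f = (LEAST k. 0 < k \<and> f ^^ k = id)"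

end

theory Submission
  imports Defs "HOL-Combinatorics.Cycles"
begin

lemma funpow_out:
  assumes "f permutes S" "z \<notin> S"
  shows "(f ^^ m) z = z"
  using assms by (induction m) (auto simp: permutes_not_in)

lemma perm_order_props:
  assumes "f permutes {..<n}"
  shows "0 < perm_order f" "f ^^ perm_order f = id"
proof -
  have "permutation f" using assms permutation_permutes by blast
  then obtain k where "f ^^ k = id" "k > 0" by (rule permutation_is_nilpotent)
  then have ex: "\<exists>k. 0 < k \<and> f ^^ k = id" by blast
  show "0 < perm_order f" "f ^^ perm_order f = id"
    unfolding perm_order_def using LeastI_ex[OF ex] by auto
qed

lemma perm_order_dvd:
  assumes "f permutes {..<n}"
  shows "f ^^ m = id \<longleftrightarrow> perm_order f dvd m"
proof -
  let ?o = "perm_order f"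
  note P = perm_order_props[OF assms]
  have pw: "f ^^ (?o * q) = id" for q
    by (induction q) (simp_all add: funpow_add P(2))
  have eq: "f ^^ m = f ^^ (m mod ?o)"
  proof -
    have "f ^^ m = f ^^ (?o * (m div ?o) + m mod ?o)" by (simp only: mult_div_mod_eq)
    also have "\<dots> = f ^^ (m mod ?o)" by (simp only: funpow_add pw id_comp)
    finally show ?thesis .
  qed
  show ?thesis
  proof
    assume h: "f ^^ m = id"
    show "?o dvd m"
    proof (rule ccontr)
      assume "\<not> ?o dvd m"
      then have "0 < m mod ?o" by (simp add: mod_greater_zero_iff_not_dvd)
      moreover have "f ^^ (m mod ?o) = id" using h eq by simp
      ultimately have "?o \<le> m mod ?o" unfolding perm_order_def
        by (intro Least_le) simp
      moreover have "m mod ?o < ?o" using P(1) by simp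
      ultimately show False by simp
    qed
  next
    assume "?o dvd m"
    then obtain q where "m = ?o * q" by blast
    then show "f ^^ m = id" using pw by simp
  qed
qed

lemma id_on:
  assumes "f permutes {..<n}" "\<And>z. z < n \<Longrightarrow> (f ^^ m) z = z"
  shows "f ^^ m = id"
proof
  fix z show "(f ^^ m) z = id z"
    using assms funpow_out[OF assms(1), of z m] by (cases "z < n") auto
qed

theorem theorem4p1:
  fixes n :: nat and \<beta> \<gamma> :: "nat \<Rightarrow> nat"
  assumes "in_Par_12 n id \<beta> \<gamma>"
  shows "perm_order \<gamma> dvd 2 * perm_order \<beta> \<and>
         (odd (perm_order \<gamma>) \<longrightarrow> perm_order \<gamma> = perm_order \<beta>)"
proof -
  from assms obtain L where pb: "\<beta> permutes {..<n}" and pg: "\<gamma> permutes {..<n}"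
    and lat: "latin_square n L" and ap: "is_autoparatopism_12 n id \<beta> \<gamma> L"
    unfolding in_Par_12_def by blast
  have bin: "(\<beta> ^^ k) x < n" if "x < n" for x k
    using permutes_in_funpow_image[OF pb, of x k] that by simp
  have key: "L (\<beta> y) x = \<gamma> (L x y)" if "x < n" "y < n" for x y
  proof -
    have "(x, y, L x y) \<in> triples n L" unfolding triples_def using that by blast
    then have "(\<beta> y, x, \<gamma> (L x y)) \<in> triples n L"
      using ap unfolding is_autoparatopism_12_def by force
    then show ?thesis unfolding triples_def by auto
  qed
  have key2: "L (\<beta> u) (\<beta> v) = \<gamma> (\<gamma> (L u v))" if "u < n" "v < n" for u v
  proof -
    have "\<beta> v < n" using bin[of v 1] that by simp
    then have "L (\<beta> u) (\<beta> v) = \<gamma> (L (\<beta> v) u)" using key that by simp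
    also have "\<dots> = \<gamma> (\<gamma> (L u v))" using key that by simp
    finally show ?thesis .
  qed
  have ev: "L ((\<beta> ^^ k) x) ((\<beta> ^^ k) y) = (\<gamma> ^^ (2 * k)) (L x y)"
    if "x < n" "y < n" for x y k
  proof (induction k)
    case 0 then show ?case by simp
  next
    case (Suc k)
    have "L ((\<beta> ^^ Suc k) x) ((\<beta> ^^ Suc k) y) = \<gamma> (\<gamma> (L ((\<beta> ^^ k) x) ((\<beta> ^^ k) y)))"
      using key2 bin that by simp
    then show ?case using Suc by simp
  qed
  have od: "L ((\<beta> ^^ Suc k) y) ((\<beta> ^^ k) x) = (\<gamma> ^^ Suc (2 * k)) (L x y)"
    if "x < n" "y < n" for x y k
  proof -
    have "L ((\<beta> ^^ Suc k) y) ((\<beta> ^^ k) x) = \<gamma> (L ((\<beta> ^^ k) x) ((\<beta> ^^ k) y))"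
      using key bin that by simp
    then show ?thesis using ev that by simp
  qed
  define b where "b = perm_order \<beta>"
  define c where "c = perm_order \<gamma>"
  have bid: "\<beta> ^^ b = id" using perm_order_props[OF pb] b_def by simp
  have g2b: "\<gamma> ^^ (2 * b) = id"
  proof (rule id_on[OF pg])
    fix z assume z: "z < n"
    then have n0: "0 < n" by simp
    have "L 0 ` {..<n} = {..<n}"
      using lat n0 unfolding latin_square_def by (intro endo_inj_surj) auto
    then obtain j where j: "j < n" "z = L 0 j"
      using z by (metis imageE lessThan_iff)
    have "L ((\<beta> ^^ b) 0) ((\<beta> ^^ b) j) = (\<gamma> ^^ (2 * b)) (L 0 j)"
      using ev n0 j by simp
    then show "(\<gamma> ^^ (2 * b)) z = z" using bid j by simp
  qed
  have d1: "c dvd 2 * b" using perm_order_dvd[OF pg] g2b c_def by simp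
  moreover have "c = b" if oc: "odd c"
  proof -
    obtain k where k: "c = Suc (2 * k)" using oc oddE by (metis Suc_eq_plus1)
    have gc: "\<gamma> ^^ c = id" using perm_order_props[OF pg] c_def by simp
    have "(\<beta> ^^ c) x = x" if x: "x < n" for x
    proof -
      have y: "(\<beta> ^^ k) x < n" using bin x by simp
      have "L ((\<beta> ^^ Suc k) ((\<beta> ^^ k) x)) ((\<beta> ^^ k) x) = L x ((\<beta> ^^ k) x)"
        using od[OF x y, of k] gc k by (simp del: funpow.simps)
      moreover have "(\<beta> ^^ Suc k) ((\<beta> ^^ k) x) = (\<beta> ^^ c) x"
        proof -
        have e: "(\<beta> ^^ (k + k)) x = (\<beta> ^^ k) ((\<beta> ^^ k) x)" by (simp only: funpow_add o_apply)
        have "c = Suc (k + k)" using k by simp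
        then show ?thesis by (simp only: funpow.simps o_apply e)
      qed
      moreover have "(\<beta> ^^ c) x < n" using bin x by simp
      moreover have inj: "inj_on (\<lambda>i. L i ((\<beta> ^^ k) x)) {..<n}"
        using lat y unfolding latin_square_def by blast
      ultimately show ?thesis
        using inj_onD[OF inj, of "(\<beta> ^^ c) x" x] x by simp
    qed
    then have "\<beta> ^^ c = id" by (rule id_on[OF pb])
    then have "b dvd c" using perm_order_dvd[OF pb] b_def by simp
    moreover have "c dvd b"
      using d1 oc coprime_dvd_mult_right_iff[of c 2 b] by (simp add: coprime_commute)
    ultimately show ?thesis by (simp add: dvd_antisym)
  qed
  ultimately show ?thesis unfolding b_def c_def by blast
qed

end
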